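(* Let $m\ge 1$ and $p\in S_m$. Then the following are equivalent: (i) for every $n\ge 2$, only finitely many $\omega\in\widetilde{S}_n$ avoid $p$; (ii) $p$ avoids the pattern $321$. Moreover, if $p$ contains $321$ then for every $n\ge2$ there are infinitely many $\omega\in\widetilde{S}_n$ avoiding $p$.
   Context: For $n\ge 2$, the affine symmetric group $\widetilde{S}_n$ is the set of bijections $\omega:\mathbb{Z}\to\mathbb{Z}$ such that $\omega(i+n)=\omega(i)+n$ for all $i\in\mathbb{Z}$ and $\sum_{i=1}^n\omega(i)=\binom{n+1}{2}$; write $\omega_i=\omega(i)$, and $[\omega_1,\dots,\omega_n]$ (the base window) determines $\omega$. For $p\in S_k$ (a permutation of $\{1,\dots,k\}$, written in one-line notation $p_1\cdots p_k$), $\omega$ contains $p$ if there exist integers $i_1<\cdots<i_k$ (arbitrary integers, not necessarily in $\{1,\dots,n\}$) such that $\omega_{i_1}\cdots\omega_{i_k}$ has the same relative order as $p_1\cdots p_k$ (i.e. $\omega_{i_a}<\omega_{i_b}$ iff $p_a<p_b$); otherwise $\omega$ avoids $p$. The same notion of containment/avoidance is used between ordinary permutations. *)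

theory Defs
  imports "HOL-Combinatorics.Permutations"
begin

definition affine_perms :: "nat \<Rightarrow> (int \<Rightarrow> int) set" where
  "affine_perms n = {w. bij w \<and> (\<forall>i. w (i + int n) = w i + int n) \<and>
      (\<Sum>i = 1..int n. w i) = int n * (int n + 1) div 2}"

definition occurs :: "('a::linorder \<Rightarrow> 'b::linorder) \<Rightarrow> 'a set \<Rightarrow> (nat \<Rightarrow> nat) \<Rightarrow> nat \<Rightarrow> bool" where
  "occurs w D q k \<longleftrightarrow> (\<exists>idx :: nat \<Rightarrow> 'a.
      (\<forall>a\<in>{1..k}. idx a \<in> D) \<and>
      (\<forall>a\<in>{1..k}. \<forall>b\<in>{1..k}. a < b \<longrightarrow> idx a < idx b) \<and>
      (\<forall>a\<in>{1..k}. \<forall>b\<in>{1..k}. w (idx a) < w (idx b) \<longleftrightarrow> q a < q b))"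

definition aff_contains :: "(int \<Rightarrow> int) \<Rightarrow> (nat \<Rightarrow> nat) \<Rightarrow> nat \<Rightarrow> bool" where
  "aff_contains w p m \<longleftrightarrow> occurs w UNIV p m"

definition perm_contains :: "(nat \<Rightarrow> nat) \<Rightarrow> nat \<Rightarrow> (nat \<Rightarrow> nat) \<Rightarrow> nat \<Rightarrow> bool" where
  "perm_contains p m q k \<longleftrightarrow> occurs p {1..m} q k"

definition pat321 :: "nat \<Rightarrow> nat" where
  "pat321 i = 4 - i"

end

theory Submission
  imports Defs
begin


lemma per_nat:
  assumes "\<forall>i. w (i + int n) = w i + int n"
  shows "w (i + int n * int N) = w i + int n * int N"
proof (induction N)
  case 0 then show ?case by simp
next
  case (Suc N)
  have "w (i + int n * int (Suc N)) = w ((i + int n * int N) + int n)" by (simp add: algebra_simps)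
  also have "\<dots> = w (i + int n * int N) + int n" using assms by blast
  finally show ?case using Suc by (simp add: algebra_simps)
qed

lemma per_int:
  assumes "\<forall>i. w (i + int n) = w i + int n"
  shows "w (i + int n * q) = w i + int n * q"
proof (cases "q \<ge> 0")
  case True
  then obtain N where "q = int N" by (metis nonneg_eq_int)
  then show ?thesis using per_nat[OF assms] by simp
next
  case False
  define N where "N = nat (-q)"
  have q: "q = - int N" using False N_def by simp
  have "w i = w ((i + int n * q) + int n * int N)" using q by simp
  also have "\<dots> = w (i + int n * q) + int n * int N" using per_nat[OF assms] by blast
  finally show ?thesis using q by simp
qed

definition omk :: "nat \<Rightarrow> nat \<Rightarrow> int \<Rightarrow> int" where
  "omk n k i = i + int n * (int k * (if i mod int n = 0 then int n - 1 else -1))"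

lemma omk_mod: "n > 0 \<Longrightarrow> omk n k i mod int n = i mod int n"
  unfolding omk_def by simp

lemma omk_bij: assumes "n > 0" shows "bij (omk n k)"
proof -
  define g where "g j = j - int n * (int k * (if j mod int n = 0 then int n - 1 else -1))" for j
  have g1: "g (omk n k i) = i" for i
    unfolding g_def using omk_mod[OF assms, of k i] by (simp add: omk_def)
  have g2: "omk n k (g j) = j" for j
  proof -
    have "g j mod int n = j mod int n" unfolding g_def
      by (simp add: mod_diff_right_eq[symmetric])
    then show ?thesis unfolding omk_def g_def by simp
  qed
  show ?thesis by (metis bijI' g1 g2)
qed

lemma omk_per: "omk n k (i + int n) = omk n k i + int n"
  unfolding omk_def by simp

lemma omk_sum: assumes "n \<ge> 2"
  shows "(\<Sum>i = 1..int n. omk n k i) = int n * (int n + 1) div 2"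
proof -
  have e: "(if i mod int n = 0 then int n - 1 else -1) = (if i = int n then int n else 0) - 1"
    if "i \<in> {1..int n}" for i
  proof -
    have "i mod int n = 0 \<longleftrightarrow> i = int n"
    proof
      assume "i mod int n = 0"
      then obtain t where t: "i = int n * t" by auto
      have "t \<ge> 1"
      proof (rule ccontr)
        assume "\<not> t \<ge> 1"
        then have "int n * t \<le> 0" using mult_nonneg_nonpos[of "int n" t] by simp
        then show False using t that by simp
      qed
      moreover have "t \<le> 1"
      proof (rule ccontr)
        assume "\<not> t \<le> 1"
        then have "int n * 2 \<le> int n * t" using mult_left_mono[of 2 t "int n"] by simp
        then show False using t that assms by simp
      qed
      ultimately show "i = int n" using t by simp
    qed simp
    then show ?thesis by simp
  qed
  define E where "E i = (if i mod int n = 0 then int n - 1 else -1)" for i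
  have "(\<Sum>i = 1..int n. omk n k i) = (\<Sum>i = 1..int n. i) + (\<Sum>i = 1..int n. int n * (int k * E i))"
    by (simp add: omk_def E_def sum.distrib)
  also have "(\<Sum>i = 1..int n. int n * (int k * E i)) = int n * (int k * (\<Sum>i = 1..int n. E i))"
    by (simp add: sum_distrib_left)
  also have "(\<Sum>i = 1..int n. E i) = (\<Sum>i = 1..int n. ((if i = int n then int n else 0) - 1))"
    using e unfolding E_def by (intro sum.cong) auto
  also have "(\<Sum>i = 1..int n. ((if i = int n then int n else 0) - 1)) = 0"
    using assms by (simp add: sum_subtractf)
  also have "(\<Sum>i = 1..int n. i) = int n * (int n + 1) div 2"
    using Sum_Icc_int[of 1 "int n"] assms by simp
  finally show ?thesis by simp
qed

lemma omk_aff: "n \<ge> 2 \<Longrightarrow> omk n k \<in> affine_perms n"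
  unfolding affine_perms_def using omk_bij[of n k] omk_per[of n k] omk_sum[of n k] by auto

lemma omk_disp: "omk n k i - i = int n * int k * (int n - 1) \<or> omk n k i - i = - (int n * int k)"
  unfolding omk_def by auto

lemma omk_no321:
  assumes "i < j" "j < l" "omk n k i > omk n k j" "omk n k j > omk n k l"
  shows False
proof -
  have "omk n k i - i > omk n k j - j" "omk n k j - j > omk n k l - l" using assms by auto
  then show False using omk_disp[of n k i] omk_disp[of n k j] omk_disp[of n k l] by auto
qed

lemma contains321_E:
  assumes "perm_contains p m pat321 3"
  obtains a b c where "a < b" "b < c" "p a > p b" "p b > p c"
proof -
  obtain idx :: "nat \<Rightarrow> nat" where
    o: "\<forall>a\<in>{1..3}. \<forall>b\<in>{1..3}. a < b \<longrightarrow> idx a < idx b"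
       "\<forall>a\<in>{1..3}. \<forall>b\<in>{1..3}. p (idx a) < p (idx b) \<longleftrightarrow> pat321 a < pat321 b"
    using assms unfolding perm_contains_def occurs_def by blast
  have "idx 1 < idx 2" "idx 2 < idx 3" using o(1) by auto
  moreover have "p (idx 1) > p (idx 2)" "p (idx 2) > p (idx 3)"
    using o(2)[rule_format, of 2 1] o(2)[rule_format, of 3 2] by (auto simp: pat321_def)
  ultimately show ?thesis using that by blast
qed

lemma omk_avoids:
  assumes "perm_contains p m pat321 3"
  shows "\<not> aff_contains (omk n k) p m"
proof
  assume "aff_contains (omk n k) p m"
  then obtain idx :: "nat \<Rightarrow> int" where
    o: "\<forall>a\<in>{1..m}. \<forall>b\<in>{1..m}. a < b \<longrightarrow> idx a < idx b"
       "\<forall>a\<in>{1..m}. \<forall>b\<in>{1..m}. omk n k (idx a) < omk n k (idx b) \<longleftrightarrow> p a < p b"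
    unfolding aff_contains_def occurs_def by blast
  obtain idx3 :: "nat \<Rightarrow> nat" where
    o3: "\<forall>a\<in>{1..3}. idx3 a \<in> {1..m}"
       "\<forall>a\<in>{1..3}. \<forall>b\<in>{1..3}. a < b \<longrightarrow> idx3 a < idx3 b"
       "\<forall>a\<in>{1..3}. \<forall>b\<in>{1..3}. p (idx3 a) < p (idx3 b) \<longleftrightarrow> pat321 a < pat321 b"
    using assms unfolding perm_contains_def occurs_def by blast
  define a where "a = idx3 1"
  define b where "b = idx3 2"
  define c where "c = idx3 3"
  have abc: "a \<in> {1..m}" "b \<in> {1..m}" "c \<in> {1..m}" "a < b" "b < c"
    using o3(1,2) unfolding a_def b_def c_def by auto
  have pabc: "p a > p b" "p b > p c"
    using o3(3)[rule_format, of 2 1] o3(3)[rule_format, of 3 2]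
    by (auto simp: pat321_def a_def b_def c_def)
  show False
    using omk_no321[of "idx a" "idx b" "idx c" n k] o(1)[rule_format, OF abc(1,2,4)]
      o(1)[rule_format, OF abc(2,3,5)] o(2)[rule_format, OF abc(2,1)] o(2)[rule_format, OF abc(3,2)] pabc
    by auto
qed

lemma infinite_avoid:
  assumes "perm_contains p m pat321 3" "n \<ge> 2"
  shows "infinite {w \<in> affine_perms n. \<not> aff_contains w p m}"
proof
  assume f: "finite {w \<in> affine_perms n. \<not> aff_contains w p m}"
  have "range (omk n) \<subseteq> {w \<in> affine_perms n. \<not> aff_contains w p m}"
    using omk_aff[OF assms(2)] omk_avoids[OF assms(1)] by auto
  then have "finite (range (omk n))" using f finite_subset by blast
  moreover have "inj (omk n)"
  proof
    fix k1 k2 assume "omk n k1 = omk n k2"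
    then have "omk n k1 (int n) = omk n k2 (int n)" by simp
    then have "int n * (int n - 1) * int k1 = int n * (int n - 1) * int k2"
      unfolding omk_def by (simp add: algebra_simps)
    moreover have "int n * (int n - 1) \<noteq> 0" using assms(2) by simp
    ultimately show "k1 = k2" by simp
  qed
  ultimately have "finite (UNIV :: nat set)" using finite_imageD by blast
  then show False by simp
qed



definition lrm :: "(nat \<Rightarrow> nat) \<Rightarrow> nat \<Rightarrow> bool" where
  "lrm p k \<longleftrightarrow> (\<forall>h. 1 \<le> h \<and> h < k \<longrightarrow> p h < p k)"

definition gset :: "(nat \<Rightarrow> nat) \<Rightarrow> nat \<Rightarrow> nat set" where
  "gset p k = {h. 1 \<le> h \<and> h < k \<and> lrm p h \<and> p h < p k}"

definition gpos :: "(nat \<Rightarrow> nat) \<Rightarrow> nat \<Rightarrow> nat" where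
  "gpos p k = Max (insert 0 (gset p k))"

lemma gset_fin: "finite (gset p k)"
  by (rule finite_subset[of _ "{..<k}"]) (auto simp: gset_def)

lemma gpos_lt: "k \<ge> 1 \<Longrightarrow> gpos p k < k"
  unfolding gpos_def using gset_fin[of p k] by (subst Max_less_iff) (auto simp: gset_def)

lemma gpos_ge: "h \<in> gset p k \<Longrightarrow> h \<le> gpos p k"
  unfolding gpos_def using gset_fin[of p k] by (intro Max_ge) auto

lemma gpos_le: "(\<And>h. h \<in> gset p k \<Longrightarrow> h \<le> b) \<Longrightarrow> gpos p k \<le> b"
  unfolding gpos_def using gset_fin[of p k] by (subst Max_le_iff) auto

primrec ZZ :: "(nat \<Rightarrow> nat) \<Rightarrow> nat \<Rightarrow> int \<Rightarrow> nat \<Rightarrow> (nat \<Rightarrow> int)" where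
  "ZZ p m C 0 = (\<lambda>_. 0)"
| "ZZ p m C (Suc k) = (ZZ p m C k)(Suc k := (if lrm p (Suc k) then ZZ p m C k k
      else max (ZZ p m C k k) (ZZ p m C k (gpos p (Suc k)) + C)) + 2 ^ (m - Suc k))"

definition zz :: "(nat \<Rightarrow> nat) \<Rightarrow> nat \<Rightarrow> int \<Rightarrow> nat \<Rightarrow> int" where
  "zz p m C k = ZZ p m C k k"

lemma ZZ_stable: "j \<le> k \<Longrightarrow> ZZ p m C k j = ZZ p m C j j"
proof (induction k)
  case 0 then show ?case by simp
next
  case (Suc k)
  then show ?case by (cases "j = Suc k") auto
qed

lemma zz_0: "zz p m C 0 = 0" by (simp add: zz_def)

lemma zz_Suc: "zz p m C (Suc k) = (if lrm p (Suc k) then zz p m C k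
      else max (zz p m C k) (zz p m C (gpos p (Suc k)) + C)) + 2 ^ (m - Suc k)"
proof -
  have "gpos p (Suc k) \<le> k" using gpos_lt[of "Suc k" p] by simp
  then show ?thesis unfolding zz_def using ZZ_stable[of "gpos p (Suc k)" k p m C] by simp
qed

lemma zz_step: "zz p m C (Suc k) \<ge> zz p m C k + 1"
proof -
  have h1: "(2::int) ^ (m - Suc k) \<ge> 1" by simp
  have h2: "zz p m C k \<le> max (zz p m C k) (zz p m C (gpos p (Suc k)) + C)" by simp
  show ?thesis
  proof (cases "lrm p (Suc k)")
    case True
    then have "zz p m C (Suc k) = zz p m C k + 2 ^ (m - Suc k)" by (simp add: zz_Suc)
    then show ?thesis using h1 by linarith
  next
    case False
    then have "zz p m C (Suc k) = max (zz p m C k) (zz p m C (gpos p (Suc k)) + C) + 2 ^ (m - Suc k)"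
      by (simp add: zz_Suc)
    then show ?thesis using h1 h2 by linarith
  qed
qed

lemma zz_strict: "a < b \<Longrightarrow> zz p m C a < zz p m C b"
proof (induction b)
  case 0 then show ?case by simp
next
  case (Suc b)
  then show ?case using zz_step[of p m C b] by (cases "a = b") auto
qed

lemma zz_mono: "a \<le> b \<Longrightarrow> zz p m C a \<le> zz p m C b"
  using zz_strict[of a b p m C] by (cases "a = b") auto

lemma zz_nonneg: "zz p m C k \<ge> 0"
  using zz_mono[of 0 k p m C] zz_0 by simp

lemma lrm_mono: "lrm p h \<Longrightarrow> lrm p i \<Longrightarrow> 1 \<le> h \<Longrightarrow> h < i \<Longrightarrow> p h < p i"
  unfolding lrm_def by blast

lemma triple_contains:
  assumes "a < b" "b < c" "p a > p b" "p b > p c" "a \<in> {1..m}" "b \<in> {1..m}" "c \<in> {1..m}"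
  shows "perm_contains p m pat321 3"
proof -
  define idx :: "nat \<Rightarrow> nat" where "idx x = (if x = 1 then a else if x = 2 then b else c)" for x
  have s: "{1..3::nat} = {1,2,3}" by auto
  show ?thesis unfolding perm_contains_def occurs_def
    apply (rule exI[of _ idx])
    using assms by (auto simp: s idx_def pat321_def)
qed

lemma B_incr:
  assumes p: "p permutes {1..m}" and av: "\<not> perm_contains p m pat321 3"
    and ab: "a < b" "a \<in> {1..m}" "b \<in> {1..m}" and nl: "\<not> lrm p a"
  shows "p a < p b"
proof (rule ccontr)
  assume "\<not> p a < p b"
  moreover have "p a \<noteq> p b" using ab p by (metis permutes_inj inj_eq less_irrefl)
  ultimately have ba: "p b < p a" by simp
  from nl obtain h where h: "1 \<le> h" "h < a" "\<not> p h < p a" unfolding lrm_def by blast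
  have "p h \<noteq> p a" using h p by (metis permutes_inj inj_eq less_irrefl)
  with h have "p h > p a" by simp
  then have "perm_contains p m pat321 3"
    using triple_contains[of h a b p m] h ab ba by auto
  with av show False by simp
qed

lemma claim1:
  assumes "lrm p i" "\<not> lrm p j" "1 \<le> i" "i < j" "p i < p j"
  shows "zz p m C j \<ge> zz p m C i + C + 1"
proof -
  obtain j' where j: "j = Suc j'" using assms(4) by (cases j) auto
  have "i \<in> gset p j" using assms unfolding gset_def by auto
  then have "i \<le> gpos p j" by (rule gpos_ge)
  then have "zz p m C i \<le> zz p m C (gpos p j)" by (rule zz_mono)
  moreover have "(2::int) ^ (m - Suc j') \<ge> 1" by simp
  moreover have "zz p m C (gpos p j) + C \<le> max (zz p m C j') (zz p m C (gpos p j) + C)" by simp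
  moreover have "zz p m C j = max (zz p m C j') (zz p m C (gpos p j) + C) + 2 ^ (m - Suc j')"
    using assms(2) unfolding j by (simp add: zz_Suc)
  ultimately show ?thesis by linarith
qed

lemma claim2:
  assumes p: "p permutes {1..m}" and av: "\<not> perm_contains p m pat321 3"
    and a: "lrm p i" "\<not> lrm p j" "1 \<le> i" "i < j" "j \<le> m" "p j < p i"
    and C: "C \<ge> 2 ^ m"
  shows "zz p m C j < zz p m C i + C"
proof -
  define P where "P h \<longleftrightarrow> lrm p h \<and> p j < p h" for h
  define i0 where "i0 = (LEAST h. P h)"
  have Pi: "P i" using a by (simp add: P_def)
  have Pi0: "P i0" unfolding i0_def using Pi by (rule LeastI)
  have i0i: "i0 \<le> i" unfolding i0_def using Pi by (rule Least_le)
  have p0: "p 0 = 0" using p by (simp add: permutes_def)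
  have i0pos: "i0 \<ge> 1" using Pi0 p0 by (cases i0) (auto simp: P_def)
  have i0min: "h < i0" if "lrm p h" "1 \<le> h" "p h \<le> p j" for h
  proof (rule ccontr)
    assume "\<not> h < i0"
    then have "i0 \<le> h" by simp
    then have "p i0 \<le> p h"
      using lrm_mono[of p i0 h] Pi0 that i0pos unfolding P_def by (cases "i0 = h") auto
    then show False using Pi0 that unfolding P_def by simp
  qed
  define z where "z = zz p m C"
  define K where "K = z (i0 - 1) + C + 2 ^ (m - i0)"
  have inv: "z k + 2 ^ (m - k) \<le> K" if "i0 \<le> k" "k \<le> j" for k
    using that(1,2)
  proof (induction k rule: dec_induct)
    case base
    have "z i0 = z (i0 - 1) + 2 ^ (m - i0)"
      using Pi0 i0pos zz_Suc[of p m C "i0 - 1"] unfolding P_def z_def by simp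
    moreover have "(2::int) ^ (m - i0) \<le> 2 ^ m" by (rule power_increasing) auto
    ultimately show ?case unfolding K_def using C by linarith
  next
    case (step k)
    have km: "Suc k \<le> m" using step a by simp
    have pw: "(2::int) ^ (m - Suc k) + 2 ^ (m - Suc k) = 2 ^ (m - k)"
    proof -
      have "m - k = Suc (m - Suc k)" using km by simp
      then show ?thesis by simp
    qed
    have pw2: "(2::int) ^ (m - k) \<le> 2 ^ (m - i0)" by (rule power_increasing) (use step in auto)
    show ?case
    proof (cases "lrm p (Suc k)")
      case True
      then have "z (Suc k) = z k + 2 ^ (m - Suc k)" unfolding z_def zz_Suc by simp
      then show ?thesis using step pw by simp
    next
      case False
      have g: "gpos p (Suc k) \<le> i0 - 1"
      proof (rule gpos_le)
        fix h assume h: "h \<in> gset p (Suc k)"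
        have "p (Suc k) \<le> p j"
        proof (cases "Suc k = j")
          case False
          then show ?thesis using B_incr[OF p av, of "Suc k" j] step a False
            \<open>\<not> lrm p (Suc k)\<close> by auto
        qed simp
        then have "h < i0" using i0min[of h] h unfolding gset_def by auto
        then show "h \<le> i0 - 1" by simp
      qed
      then have "z (gpos p (Suc k)) \<le> z (i0 - 1)" unfolding z_def by (rule zz_mono)
      moreover have "z (Suc k) = max (z k) (z (gpos p (Suc k)) + C) + 2 ^ (m - Suc k)"
        using False unfolding z_def zz_Suc by simp
      moreover have "z k + 2 ^ (m - k) \<le> K" using step by simp
      ultimately show ?thesis using pw pw2 unfolding K_def
        by (smt (verit))
    qed
  qed
  have "z j + 2 ^ (m - j) \<le> K" using inv[of j] Pi0 i0i a by simp
  moreover have "z i0 = z (i0 - 1) + 2 ^ (m - i0)"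
    using Pi0 i0pos zz_Suc[of p m C "i0 - 1"] unfolding P_def z_def by simp
  moreover have "z i0 \<le> z i" unfolding z_def using i0i by (rule zz_mono)
  moreover have "(2::int) ^ (m - j) \<ge> 1" by simp
  ultimately show ?thesis unfolding K_def z_def by linarith
qed

lemma embed:
  assumes w: "w \<in> affine_perms n" and n: "n \<ge> 1" and p: "p permutes {1..m}"
    and av: "\<not> perm_contains p m pat321 3"
    and rs: "r \<in> {1..int n}" "s \<in> {1..int n}" and G: "w r - w s \<ge> int n * 2 ^ m"
  shows "aff_contains w p m"
proof -
  have per: "\<forall>i. w (i + int n) = w i + int n" using w unfolding affine_perms_def by blast
  have inj: "inj w" using w unfolding affine_perms_def by (auto intro: bij_is_inj)
  have pinj: "p a \<noteq> p b" if "a \<noteq> b" for a b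
    using that p by (metis permutes_inj inj_eq)
  define G where "G = w r - w s"
  define C where "C = G div int n"
  have npos: "int n > 0" using n by simp
  have C1: "int n * C \<le> G"
    using mult_div_mod_eq[of "int n" G] pos_mod_sign[OF npos, of G] unfolding C_def by linarith
  have C2: "G < int n * C + int n"
    using mult_div_mod_eq[of "int n" G] pos_mod_bound[OF npos, of G] unfolding C_def by linarith
  have C3: "C \<ge> 2 ^ m"
  proof -
    have "(int n * 2 ^ m) div int n \<le> G div int n"
      using zdiv_mono1[OF G[folded G_def] npos] .
    then show ?thesis using npos unfolding C_def by simp
  qed
  have Gpos: "G > 0"
  proof -
    have "int n * 2 ^ m > 0" using npos by simp
    then show ?thesis using G unfolding G_def by linarith
  qed
  define z where "z = zz p m C"
  define idx where "idx k = (if lrm p k then r else s) + int n * z k" for k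
  have val: "w (idx k) = (if lrm p k then w r else w s) + int n * z k" for k
    unfolding idx_def using per_int[OF per] by simp
  have posl: "idx a < idx b" if "a < b" for a b
  proof -
    have "z a + 1 \<le> z b" using zz_strict[OF that, of p m C] unfolding z_def by simp
    then have "int n * (z a + 1) \<le> int n * z b" using npos by (intro mult_left_mono) auto
    then have "int n * z a + int n \<le> int n * z b" by (simp add: algebra_simps)
    moreover have "z a < z b" using zz_strict[OF that, of p m C] unfolding z_def by simp
    ultimately show ?thesis unfolding idx_def using rs npos by auto
  qed
  have vall: "(w (idx a) < w (idx b)) = (p a < p b)"
    if ab: "a < b" "a \<in> {1..m}" "b \<in> {1..m}" for a b
  proof -
    have zab: "z a < z b" using zz_strict[OF ab(1)] unfolding z_def by simp
    then have nz: "int n * z a \<le> int n * z b" using npos by (intro mult_left_mono) auto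
    show ?thesis
    proof (cases "lrm p a"; cases "lrm p b")
      assume la: "lrm p a" and lb: "lrm p b"
      have "p a < p b" using lb ab unfolding lrm_def by auto
      moreover have "int n * z a < int n * z b" using zab npos by simp
      ultimately show ?thesis using la lb val by simp
    next
      assume la: "\<not> lrm p a" and lb: "lrm p b"
      have "p a < p b" using lb ab unfolding lrm_def by auto
      moreover have "w (idx a) < w (idx b)" using la lb val[of a] val[of b] nz Gpos
        unfolding G_def by simp
      ultimately show ?thesis by simp
    next
      assume la: "\<not> lrm p a" and lb: "\<not> lrm p b"
      have "p a < p b" using B_incr[OF p av ab la] .
      moreover have "int n * z a < int n * z b" using zab npos by simp
      ultimately show ?thesis using la lb val by simp
    next
      assume la: "lrm p a" and lb: "\<not> lrm p b"
      have va: "w (idx a) = w r + int n * z a" and vb: "w (idx b) = w s + int n * z b"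
        using la lb val by auto
      show ?thesis
      proof (cases "p a < p b")
        case True
        have "z b \<ge> z a + C + 1" using claim1[OF la lb _ ab(1) True] ab unfolding z_def by simp
        then have "int n * (C + 1) \<le> int n * (z b - z a)" using npos by (intro mult_left_mono) auto
        then have "int n * C + int n \<le> int n * z b - int n * z a" by (simp add: algebra_simps)
        then have "w (idx a) < w (idx b)" using va vb C2 unfolding G_def by linarith
        then show ?thesis using True by simp
      next
        case False
        then have "p b < p a" using pinj[of a b] ab by linarith
        then have "z b < z a + C" using claim2[OF p av la lb _ ab(1) _ _ C3] ab unfolding z_def by simp
        then have "int n * (z b - z a) \<le> int n * C" using npos by (intro mult_left_mono) auto
        then have "int n * z b - int n * z a \<le> int n * C" by (simp add: algebra_simps)
        then have "\<not> w (idx a) < w (idx b)" using va vb C1 unfolding G_def by linarith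
        then show ?thesis using False by simp
      qed
    qed
  qed
  have vall2: "(w (idx a) < w (idx b)) = (p a < p b)" if ab: "a \<in> {1..m}" "b \<in> {1..m}" for a b
  proof (cases a b rule: linorder_cases)
    case less then show ?thesis using vall ab by blast
  next
    case equal then show ?thesis by simp
  next
    case greater
    have e: "(w (idx b) < w (idx a)) = (p b < p a)" using vall[OF greater] ab by blast
    have "idx a \<noteq> idx b" using posl[OF greater] by simp
    then have "w (idx a) \<noteq> w (idx b)" using inj by (metis inj_eq)
    moreover have "p a \<noteq> p b" using pinj greater by simp
    ultimately show ?thesis using e by linarith
  qed
  show ?thesis unfolding aff_contains_def occurs_def
    by (rule exI[of _ idx]) (use posl vall2 in auto)
qed

lemma window_det:
  assumes "w1 \<in> affine_perms n" "w2 \<in> affine_perms n" "n \<ge> 1"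
    and eq: "\<forall>i\<in>{1..int n}. w1 i = w2 i"
  shows "w1 = w2"
proof
  fix x
  have p1: "\<forall>i. w1 (i + int n) = w1 i + int n" and p2: "\<forall>i. w2 (i + int n) = w2 i + int n"
    using assms unfolding affine_perms_def by blast+
  define r where "r = (x - 1) mod int n + 1"
  define q where "q = (x - 1) div int n"
  have x: "x = r + int n * q" unfolding r_def q_def by (simp add: algebra_simps)
  have npos: "int n > 0" using assms(3) by simp
  have "r \<in> {1..int n}" unfolding r_def
    using pos_mod_sign[OF npos, of "x - 1"] pos_mod_bound[OF npos, of "x - 1"] by simp
  then show "w1 x = w2 x" unfolding x using per_int[OF p1] per_int[OF p2] eq by simp
qed

lemma finite_avoid:
  assumes p: "p permutes {1..m}" and av: "\<not> perm_contains p m pat321 3" and n: "n \<ge> 2"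
  shows "finite {w \<in> affine_perms n. \<not> aff_contains w p m}"
proof -
  define S where "S = {w \<in> affine_perms n. \<not> aff_contains w p m}"
  define B where "B = int n * 2 ^ m"
  define K where "K = B + int n + 1"
  have npos: "int n > 0" using n by simp
  have bnd: "w i \<in> {-K..K}" if w: "w \<in> S" and i: "i \<in> {1..int n}" for w i
  proof -
    have wa: "w \<in> affine_perms n" and nc: "\<not> aff_contains w p m" using w unfolding S_def by auto
    have spread: "w r - w s < B" if "r \<in> {1..int n}" "s \<in> {1..int n}" for r s
      using embed[OF wa _ p av that] nc n unfolding B_def by force
    define T where "T = (\<Sum>s = 1..int n. w s)"
    have T: "T = int n * (int n + 1) div 2" using wa unfolding affine_perms_def T_def by blast
    have T0: "0 \<le> T" unfolding T using npos by simp
    have T1: "T \<le> int n * (int n + 1)"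
    proof -
      define X where "X = int n * (int n + 1)"
      have "X \<ge> 0" unfolding X_def using npos by simp
      moreover have "2 * (X div 2) + X mod 2 = X" by (rule mult_div_mod_eq)
      moreover have "X mod 2 \<ge> 0" by simp
      moreover have "X div 2 \<ge> 0" using \<open>X \<ge> 0\<close> by simp
      ultimately show ?thesis unfolding T X_def[symmetric] by linarith
    qed
    have card: "card {1..int n} = n" by simp
    have ne: "{1..int n} \<noteq> {}" using npos by simp
    have "(\<Sum>s = 1..int n. w i) < (\<Sum>s = 1..int n. w s + B)"
      using spread[OF i] ne by (intro sum_strict_mono) (auto, fastforce)
    then have "int n * w i < T + int n * B" unfolding T_def by (simp add: sum.distrib card)
    then have "int n * w i < int n * (int n + 1 + B)" using T1 by (simp add: algebra_simps)
    then have up: "w i < int n + 1 + B" using npos by (simp add: mult_less_cancel_left_pos)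
    have "(\<Sum>s = 1..int n. w s) < (\<Sum>s = 1..int n. w i + B)"
      using spread[OF _ i] ne by (intro sum_strict_mono) (auto, fastforce)
    then have "T < int n * (w i + B)" unfolding T_def by (simp add: sum.distrib card algebra_simps)
    then have "0 < int n * (w i + B)" using T0 by simp
    then have "0 < w i + B" using npos by (simp add: zero_less_mult_iff)
    moreover have "B \<ge> 0" unfolding B_def by simp
    ultimately show ?thesis using up unfolding K_def by auto
  qed
  define F where "F w = restrict w {1..int n}" for w :: "int \<Rightarrow> int"
  have "F ` S \<subseteq> (\<Pi>\<^sub>E i \<in> {1..int n}. {-K..K})"
    using bnd unfolding F_def by auto
  then have "finite (F ` S)" by (rule finite_subset) (intro finite_PiE; simp)
  moreover have "inj_on F S"
  proof
    fix w1 w2 assume h: "w1 \<in> S" "w2 \<in> S" "F w1 = F w2"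
    have "\<forall>i\<in>{1..int n}. w1 i = w2 i"
    proof
      fix i assume "i \<in> {1..int n}"
      then show "w1 i = w2 i" using fun_cong[OF h(3), of i] unfolding F_def by simp
    qed
    then show "w1 = w2" using window_det[of w1 n w2] n h(1,2) unfolding S_def by simp
  qed
  ultimately show ?thesis unfolding S_def[symmetric] by (rule finite_imageD)
qed


theorem theorem1:
  fixes p :: "nat \<Rightarrow> nat" and m :: nat
  assumes "m \<ge> 1" and "p permutes {1..m}"
  shows "((\<forall>n::nat. n \<ge> 2 \<longrightarrow> finite {w \<in> affine_perms n. \<not> aff_contains w p m})
            \<longleftrightarrow> \<not> perm_contains p m pat321 3)
         \<and> (perm_contains p m pat321 3 \<longrightarrow>
            (\<forall>n::nat. n \<ge> 2 \<longrightarrow> infinite {w \<in> affine_perms n. \<not> aff_contains w p m}))"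
proof -
  have inf: "perm_contains p m pat321 3 \<longrightarrow>
            (\<forall>n::nat. n \<ge> 2 \<longrightarrow> infinite {w \<in> affine_perms n. \<not> aff_contains w p m})"
    using infinite_avoid by blast
  have fin: "\<not> perm_contains p m pat321 3 \<Longrightarrow> n \<ge> 2 \<Longrightarrow> finite {w \<in> affine_perms n. \<not> aff_contains w p m}" for n
    using finite_avoid[OF assms(2)] by blast
  show ?thesis using inf fin by (metis order_refl)
qed

end
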